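(* Let $a\neq b$ be complex numbers and $d\ge 1$. Then $COS_d\subseteq PCS_d\subseteq MS_d$, where: $PCS_d$ is the set of pairs $(P,Q)\in\mathcal{P}_d\times\mathcal{P}_d$ such that the Abel equation $y'=p(x)y^3+q(x)y^2$, with $p=P'$, $q=Q'$, has a parametric center on $[a,b]$; $MS_d$ is the set of pairs $(P,Q)\in\mathcal{P}_d\times\mathcal{P}_d$ such that $\int_a^b P^i(x)q(x)\,dx=0$ and $\int_a^b Q^i(x)p(x)\,dx=0$ for all integers $i\ge 0$; and $COS_d$ is the set of pairs $(P,Q)\in\mathcal{P}_d\times\mathcal{P}_d$ for which there exist polynomials $\widetilde P,\widetilde Q,W$ with $W(a)=W(b)$ and $P=\widetilde P\circ W$, $Q=\widetilde Q\circ W$.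
   Context: $\mathcal{P}_d$ denotes the complex vector space of polynomials $P\in\mathbb{C}[x]$ of degree at most $d$ with $P(a)=P(b)=0$. For polynomial coefficients $p,q$, the equation $y'=p(x)y^3+\epsilon q(x)y^2$ has a center on $[a,b]$ if every solution with $|y(a)|$ sufficiently small satisfies $y(b)=y(a)$ (the solution being analytically continued along the segment from $a$ to $b$). The equation $y'=p(x)y^3+q(x)y^2$ has a parametric center on $[a,b]$ if for every $\epsilon\in\mathbb{C}$ the equation $y'=p(x)y^3+\epsilon q(x)y^2$ has a center on $[a,b]$. *)

theory Defs
  imports "HOL-Complex_Analysis.Complex_Analysis" "HOL-Computational_Algebra.Polynomial"
begin

definition Pd :: "nat \<Rightarrow> complex \<Rightarrow> complex \<Rightarrow> complex poly set" where
  "Pd d a b = {P. degree P \<le> d \<and> poly P a = 0 \<and> poly P b = 0}"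

text \<open>A solution
analytically continued along the segment x = a + t (b - a), t in [0,1], is
described by Y(t) = y(a + t(b-a)), which satisfies
Y'(t) = (b - a) (p(x) Y^3 + q(x) Y^2).\<close>
definition has_center ::
  "(complex \<Rightarrow> complex) \<Rightarrow> (complex \<Rightarrow> complex) \<Rightarrow> complex \<Rightarrow> complex \<Rightarrow> bool" where
  "has_center p q a b \<longleftrightarrow>
     (\<exists>\<delta>>0. \<forall>Y :: real \<Rightarrow> complex.
        norm (Y 0) < \<delta> \<and>
        (\<forall>t\<in>{0..1}. (Y has_vector_derivative
            ((b - a) * (p (a + of_real t * (b - a)) * (Y t)^3
                      + q (a + of_real t * (b - a)) * (Y t)^2))) (at t within {0..1}))
        \<longrightarrow> Y 1 = Y 0)"

definition PCS :: "nat \<Rightarrow> complex \<Rightarrow> complex \<Rightarrow> (complex poly \<times> complex poly) set" where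
  "PCS d a b = {(P, Q). P \<in> Pd d a b \<and> Q \<in> Pd d a b \<and>
      (\<forall>\<epsilon>::complex. has_center (poly (pderiv P)) (\<lambda>x. \<epsilon> * poly (pderiv Q) x) a b)}"

definition MS :: "nat \<Rightarrow> complex \<Rightarrow> complex \<Rightarrow> (complex poly \<times> complex poly) set" where
  "MS d a b = {(P, Q). P \<in> Pd d a b \<and> Q \<in> Pd d a b \<and>
      (\<forall>i::nat. contour_integral (linepath a b) (\<lambda>x. (poly P x)^i * poly (pderiv Q) x) = 0
              \<and> contour_integral (linepath a b) (\<lambda>x. (poly Q x)^i * poly (pderiv P) x) = 0)}"

definition COS :: "nat \<Rightarrow> complex \<Rightarrow> complex \<Rightarrow> (complex poly \<times> complex poly) set" where
  "COS d a b = {(P, Q). P \<in> Pd d a b \<and> Q \<in> Pd d a b \<and>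
      (\<exists>Pt Qt W :: complex poly. poly W a = poly W b \<and> P = pcompose Pt W \<and> Q = pcompose Qt W)}"

end

theory Submission
  imports Defs "HOL-Computational_Algebra.Formal_Power_Series" "HOL-Computational_Algebra.Polynomial_FPS"
begin

no_notation Finite_Cartesian_Product.vec_nth (infixl "$" 90)



function cY :: "('k::comm_ring_1 \<Rightarrow> 'k) \<Rightarrow> 'k \<Rightarrow> 'k \<Rightarrow> nat \<Rightarrow> 'k" where
  "cY I A B n = (if n = 0 then 0 else if n = 1 then 1 else
     I (A * fps_nth (Abs_fps (\<lambda>i. if i < n then cY I A B i else 0) * Abs_fps (\<lambda>i. if i < n then cY I A B i else 0)
            * Abs_fps (\<lambda>i. if i < n then cY I A B i else 0)) n
      + B * fps_nth (Abs_fps (\<lambda>i. if i < n then cY I A B i else 0) * Abs_fps (\<lambda>i. if i < n then cY I A B i else 0)) n))"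
  by pat_completeness auto
termination by (relation "Wellfounded.measure (\<lambda>(I,A,B,n). n)") auto

declare cY.simps[simp del]

definition Yf :: "('k::comm_ring_1 \<Rightarrow> 'k) \<Rightarrow> 'k \<Rightarrow> 'k \<Rightarrow> 'k fps" where
  "Yf I A B = Abs_fps (cY I A B)"

lemma trunc2:
  fixes f g :: "'a::comm_ring_1 fps"
  assumes "f$0 = 0" "g$0 = 0" "\<And>i. i < n \<Longrightarrow> f$i = g$i"
  shows "(f*f)$n = (g*g)$n"
  unfolding fps_mult_nth
proof (rule sum.cong[OF refl])
  fix i assume i: "i \<in> {0..n}"
  show "f $ i * f $ (n - i) = g $ i * g $ (n - i)"
  proof (cases "i = 0 \<or> i = n")
    case True then show ?thesis using assms by auto
  next
    case False then show ?thesis using assms i by auto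
  qed
qed

lemma trunc3:
  fixes f g :: "'a::comm_ring_1 fps"
  assumes "f$0 = 0" "g$0 = 0" "\<And>i. i < n \<Longrightarrow> f$i = g$i"
  shows "(f*f*f)$n = (g*g*g)$n"
  unfolding fps_mult_nth[of "f*f"] fps_mult_nth[of "g*g"]
proof (rule sum.cong[OF refl])
  fix i assume i: "i \<in> {0..n}"
  show "(f*f) $ i * f $ (n - i) = (g*g) $ i * g $ (n - i)"
  proof (cases "i = 0 \<or> i = n")
    case True then show ?thesis using assms by auto
  next
    case False
    then have "(f*f) $ i = (g*g) $ i" using assms i by (intro trunc2) auto
    moreover have "f $ (n - i) = g $ (n-i)" using assms i False by auto
    ultimately show ?thesis by simp
  qed
qed

lemma Yf_0[simp]: "Yf I A B $ 0 = 0"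
  unfolding Yf_def by (simp add: cY.simps)

lemma Yf_1[simp]: "Yf I A B $ 1 = 1"
  unfolding Yf_def by (simp add: cY.simps[of _ _ _ "Suc 0"])

lemma Yf_1'[simp]: "Yf I A B $ Suc 0 = 1"
  using Yf_1[of I A B] by simp

lemma Yf_rec:
  assumes "n \<ge> 2"
  shows "Yf I A B $ n = I (A * (Yf I A B * Yf I A B * Yf I A B) $ n + B * (Yf I A B * Yf I A B) $ n)"
proof -
  let ?T = "Abs_fps (\<lambda>i. if i < n then cY I A B i else 0)"
  have e1: "?T$0 = 0" using assms by (simp add: cY.simps)
  have e2: "Yf I A B $0 = 0" by simp
  have ag: "\<And>i. i < n \<Longrightarrow> ?T$i = Yf I A B $ i" by (simp add: Yf_def)
  have "Yf I A B $ n = I (A * (?T*?T*?T) $ n + B * (?T*?T) $ n)"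
    using assms unfolding Yf_def by (simp only: fps.Abs_fps_inverse mem_Collect_eq UNIV_I, subst cY.simps[of I A B n]) simp
  also have "(?T*?T*?T) $ n = (Yf I A B * Yf I A B * Yf I A B) $ n"
    by (rule trunc3[OF e1 e2 ag])
  also have "(?T*?T) $ n = (Yf I A B * Yf I A B) $ n"
    by (rule trunc2[OF e1 e2 ag])
  finally show ?thesis .
qed

lemma Yf_unique:
  assumes F0: "F$0 = 0" and F1: "F$1 = 1"
    and Fr: "\<And>n. n \<ge> 2 \<Longrightarrow> F $ n = I (A * (F*F*F) $ n + B * (F*F) $ n)"
  shows "F = Yf I A B"
proof -
  have "\<forall>m<n. F$m = Yf I A B $ m" for n
  proof (induction n)
    case 0 then show ?case by simp
  next
    case (Suc n)
    have "F$n = Yf I A B $ n"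
    proof (cases "n \<ge> 2")
      case True
      have c3: "(F*F*F)$n = (Yf I A B * Yf I A B * Yf I A B)$n"
        by (rule trunc3) (use F0 Suc in auto)
      have c2: "(F*F)$n = (Yf I A B * Yf I A B)$n"
        by (rule trunc2) (use F0 Suc in auto)
      have "F$n = I (A * (F*F*F)$n + B*(F*F)$n)" by (rule Fr[OF True])
      also have "\<dots> = Yf I A B $ n" by (simp only: c3 c2 Yf_rec[OF True])
      finally show ?thesis .
    next
      case False
      then have "n = 0 \<or> n = 1" by auto
      then show ?thesis using F0 F1 by auto
    qed
    then show ?case using Suc by (auto simp: less_Suc_eq)
  qed
  then show ?thesis by (intro fps_ext) blast
qed

definition fmap :: "('a \<Rightarrow> 'b) \<Rightarrow> 'a fps \<Rightarrow> 'b fps" where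
  "fmap h F = Abs_fps (\<lambda>n. h (F$n))"

lemma fmap_nth[simp]: "fmap h F $ n = h (F $ n)"
  by (simp add: fmap_def)

lemma fmap_mult:
  fixes h :: "'a::comm_ring_1 \<Rightarrow> 'b::comm_ring_1"
  assumes h0: "h 0 = 0" and hadd: "\<And>x y. h (x+y) = h x + h y" and hmult: "\<And>x y. h (x*y) = h x * h y"
  shows "fmap h (f*g) = fmap h f * fmap h g"
proof (rule fps_ext)
  fix n
  have "h ((f*g)$n) = (\<Sum>i=0..n. h (f$i * g$(n-i)))"
    unfolding fps_mult_nth by (rule sum_comp_morphism[symmetric, of h, OF h0 hadd, unfolded o_def])
  then show "fmap h (f*g) $ n = (fmap h f * fmap h g) $ n"
    by (simp add: fps_mult_nth hmult)
qed

lemma Yf_map: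
  fixes h :: "'a::comm_ring_1 \<Rightarrow> 'b::comm_ring_1"
  assumes h0: "h 0 = 0" and h1: "h 1 = 1" and hadd: "\<And>x y. h (x+y) = h x + h y"
    and hmult: "\<And>x y. h (x*y) = h x * h y"
    and hI: "\<And>k. h (I k) = J (h k)"
  shows "fmap h (Yf I A B) = Yf J (h A) (h B)"
proof (rule Yf_unique)
  show "fmap h (Yf I A B) $ 0 = 0" using h0 by simp
  show "fmap h (Yf I A B) $ 1 = 1" using h1 by simp
  fix n :: nat assume n: "n \<ge> 2"
  let ?Y = "Yf I A B" and ?H = "fmap h (Yf I A B)"
  have m: "\<And>f g. fmap h (f*g) = fmap h f * fmap h g" by (rule fmap_mult[OF h0 hadd hmult])
  have "?H $ n = h (I (A * (?Y*?Y*?Y) $ n + B * (?Y*?Y) $ n))" by (simp only: fmap_nth Yf_rec[OF n])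
  also have "\<dots> = J (h A * h ((?Y*?Y*?Y) $ n) + h B * h ((?Y*?Y) $ n))" by (simp add: hI hadd hmult)
  also have "h ((?Y*?Y*?Y) $ n) = (?H*?H*?H)$n" by (metis fmap_nth m)
  also have "h ((?Y*?Y) $ n) = (?H*?H)$n" by (metis fmap_nth m)
  finally show "?H $ n = J (h A * (?H*?H*?H) $ n + h B * (?H*?H) $ n)" .
qed

lemma Yf_deriv:
  assumes dI: "\<And>k. d (I k) = k" and d0: "d 0 = 0" and d1: "d 1 = 0"
  shows "d (Yf I A B $ n) = A * (Yf I A B * Yf I A B * Yf I A B) $ n + B * (Yf I A B * Yf I A B) $ n"
proof (cases "n \<ge> 2")
  case True then show ?thesis by (simp only: Yf_rec[OF True] dI)
next
  case False
  then have "n = 0 \<or> n = 1" by auto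
  then show ?thesis using d0 d1 by (auto simp: fps_mult_nth_1)
qed


section \<open>Polynomial integration\<close>

lemma pderiv_sum: "pderiv (sum f S) = (\<Sum>x\<in>S. pderiv (f x))"
  using sum_comp_morphism[of pderiv f S] by (simp add: pderiv_add o_def)

definition pint :: "complex poly \<Rightarrow> complex poly" where
  "pint F = (\<Sum>i\<le>degree F. monom (coeff F i / of_nat (Suc i)) (Suc i))"

lemma pderiv_pint[simp]: "pderiv (pint F) = F"
proof -
  have "pderiv (pint F) = (\<Sum>i\<le>degree F. monom (coeff F i) i)"
    unfolding pint_def pderiv_sum pderiv_monom
    by (intro sum.cong refl) (simp del: of_nat_Suc)
  also have "\<dots> = F" by (rule poly_as_sum_of_monoms)
  finally show ?thesis .
qed

definition Ia :: "complex \<Rightarrow> complex poly \<Rightarrow> complex poly" where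
  "Ia a F = pint F - [:poly (pint F) a:]"

lemma pderiv_Ia[simp]: "pderiv (Ia a F) = F"
  by (simp add: Ia_def pderiv_diff)

lemma poly_Ia_a[simp]: "poly (Ia a F) a = 0"
  by (simp add: Ia_def)

lemma Ia_unique:
  assumes "pderiv G = F" "poly G a = 0"
  shows "Ia a F = G"
proof -
  have "pderiv (G - Ia a F) = 0" using assms by (simp add: pderiv_diff)
  then have "degree (G - Ia a F) = 0" by (simp add: pderiv_eq_0_iff)
  then obtain c where c: "G - Ia a F = [:c:]" by (meson degree_eq_zeroE)
  then have "poly (G - Ia a F) a = c" by simp
  then have "c = 0" using assms by simp
  then show ?thesis using c by simp
qed

lemma Ia_0[simp]: "Ia a 0 = 0"
  by (rule Ia_unique) auto

lemma Ia_add: "Ia a (F + G) = Ia a F + Ia a G"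
  by (rule Ia_unique) (auto simp: pderiv_add)

lemma Ia_smult: "Ia a (smult c F) = smult c (Ia a F)"
  by (rule Ia_unique) (auto simp: pderiv_smult)

lemma contour_integral_poly:
  assumes "pderiv G = F"
  shows "contour_integral (linepath a b) (poly F) = poly G b - poly G a"
proof -
  have "((poly F) has_contour_integral (poly G (pathfinish (linepath a b)) - poly G (pathstart (linepath a b)))) (linepath a b)"
    by (rule contour_integral_primitive[where S=UNIV]) (auto simp: assms[symmetric] intro: poly_DERIV)
  then show ?thesis by (auto intro: contour_integral_unique)
qed

section \<open>Derivation and evaluation on series of polynomials\<close>

definition Dp :: "complex poly fps \<Rightarrow> complex poly fps" where
  "Dp F = fmap pderiv F"

lemma Dp_nth[simp]: "Dp F $ n = pderiv (F $ n)"
  by (simp add: Dp_def)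

lemma Dp_add[simp]: "Dp (f + g) = Dp f + Dp g"
  by (rule fps_ext) (simp add: pderiv_add)

lemma Dp_diff[simp]: "Dp (f - g) = Dp f - Dp g"
  by (rule fps_ext) (simp add: pderiv_diff)

lemma Dp_mult[simp]: "Dp (f * g) = Dp f * g + f * Dp g"
proof (rule fps_ext)
  fix n
  show "Dp (f * g) $ n = (Dp f * g + f * Dp g) $ n"
  proof -
    have "Dp (f * g) $ n = (\<Sum>i=0..n. pderiv (f$i) * g$(n-i) + f$i * pderiv (g$(n-i)))"
      by (simp add: fps_mult_nth pderiv_sum pderiv_mult mult.commute add.commute)
    then show ?thesis by (simp add: fps_mult_nth sum.distrib)
  qed
qed

lemma Dp_const[simp]: "Dp (fps_const c) = fps_const (pderiv c)"
  by (rule fps_ext) simp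

lemma Dp_X[simp]: "Dp fps_X = 0"
  by (rule fps_ext) (simp add: fps_X_nth)

lemma Dp_one[simp]: "Dp 1 = 0"
  by (rule fps_ext) (simp add: fps_one_nth)

definition ev :: "complex \<Rightarrow> complex poly fps \<Rightarrow> complex fps" where
  "ev z F = fmap (\<lambda>p. poly p z) F"

lemma ev_nth[simp]: "ev z F $ n = poly (F $ n) z"
  by (simp add: ev_def)

lemma ev_mult[simp]: "ev z (f * g) = ev z f * ev z g"
  unfolding ev_def by (rule fmap_mult) auto

lemma ev_add[simp]: "ev z (f + g) = ev z f + ev z g"
  by (rule fps_ext) simp

lemma ev_diff[simp]: "ev z (f - g) = ev z f - ev z g"
  by (rule fps_ext) simp

lemma ev_const[simp]: "ev z (fps_const c) = fps_const (poly c z)"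
  by (rule fps_ext) simp

lemma ev_X[simp]: "ev z fps_X = fps_X"
  by (rule fps_ext) (simp add: fps_X_nth)

lemma ev_one[simp]: "ev z 1 = 1"
  by (rule fps_ext) (simp add: fps_one_nth)

lemma linear_unique:
  assumes D: "Dp K = G * K" and G0: "G $ 0 = 0" and Ka: "ev a K = 0"
  shows "K = 0"
proof -
  have "\<forall>m<n. K$m = 0" for n
  proof (induction n)
    case 0 then show ?case by simp
  next
    case (Suc n)
    have "pderiv (K$n) = (G*K)$n" using D by (metis Dp_nth)
    also have "\<dots> = 0" unfolding fps_mult_nth
    proof (intro sum.neutral ballI)
      fix i assume i: "i \<in> {0..n}"
      show "G $ i * K $ (n - i) = 0"
        using Suc G0 i by (cases "i = 0") auto
    qed
    finally have "pderiv (K$n) = 0" .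
    moreover have "poly (K$n) a = 0" using Ka by (metis ev_nth fps_zero_nth)
    ultimately have "Ia a 0 = K$n" by (intro Ia_unique) auto
    then have "K$n = 0" by simp
    then show ?case using Suc by (auto simp: less_Suc_eq)
  qed
  then show ?thesis by (intro fps_ext) auto
qed

lemma integral_from_D:
  assumes "Dp R = F" and "ev a R = 0"
  shows "contour_integral (linepath a b) (poly (F$n)) = poly (R$n) b"
proof -
  have "pderiv (R$n) = F$n" using assms by (metis Dp_nth)
  then have "contour_integral (linepath a b) (poly (F$n)) = poly (R$n) b - poly (R$n) a"
    by (rule contour_integral_poly)
  moreover have "poly (R$n) a = 0" using assms by (metis ev_nth fps_zero_nth)
  ultimately show ?thesis by simp
qed


section \<open>One-parameter families\<close>

lemma poly_map_Ia: "poly (map_poly (Ia a) k) [:e:] = Ia a (poly k [:e:])"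
proof (induction k)
  case 0 then show ?case by simp
next
  case (pCons c k)
  have "poly (map_poly (Ia a) (pCons c k)) [:e:] = Ia a c + [:e:] * poly (map_poly (Ia a) k) [:e:]"
    by (simp add: map_poly_pCons)
  also have "\<dots> = Ia a (poly (pCons c k) [:e:])"
    using pCons by (simp add: Ia_add Ia_smult)
  finally show ?case .
qed

lemma poly_poly_swap: "poly (poly k [:e:]) b = poly (map_poly (\<lambda>f. poly f b) k) e"
proof (induction k)
  case 0 then show ?case by simp
next
  case (pCons c k)
  then show ?case by (simp add: map_poly_pCons)
qed

lemma coeff_mult_1: "coeff (f * g) 1 = coeff f 0 * coeff g 1 + coeff f 1 * coeff g 0"
  by (simp add: coeff_mult)

lemma fmap_c1_mult:
  fixes f g :: "'a::comm_ring_1 poly fps"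
  shows "fmap (\<lambda>k. coeff k 1) (f*g) = fmap (\<lambda>k. coeff k 0) f * fmap (\<lambda>k. coeff k 1) g
          + fmap (\<lambda>k. coeff k 1) f * fmap (\<lambda>k. coeff k 0) g"
  by (rule fps_ext) (simp add: fps_mult_nth coeff_sum coeff_mult_1[unfolded One_nat_def] sum.distrib)

lemma fmap_c0_mult:
  fixes f g :: "'a::comm_ring_1 poly fps"
  shows "fmap (\<lambda>k. coeff k 0) (f*g) = fmap (\<lambda>k. coeff k 0) f * fmap (\<lambda>k. coeff k 0) g"
  by (rule fmap_mult) (auto simp: coeff_mult_0)

lemma fmap_add: "fmap h (f + g) = fmap h f + fmap h g" if "\<And>x y. h (x+y) = h x + h y"
  by (rule fps_ext) (simp add: that)

lemma fmap_const_c: "fmap (\<lambda>k. coeff k i) (fps_const c) = fps_const (coeff c i)"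
  by (rule fps_ext) simp

lemma zero_on_infinite:
  fixes G :: "complex poly"
  assumes "infinite S" "\<And>e. e \<in> S \<Longrightarrow> poly G e = 0"
  shows "G = 0"
proof (rule ccontr)
  assume "G \<noteq> 0"
  then have "finite {x. poly G x = 0}" by (rule poly_roots_finite)
  moreover have "S \<subseteq> {x. poly G x = 0}" using assms by auto
  ultimately show False using assms(1) finite_subset by blast
qed

locale family =
  fixes a b :: complex and A0 A1 B0 B1 :: "complex poly"
begin

definition "YK = Yf (map_poly (Ia a)) [:A0, A1:] [:B0, B1:]"
definition "E = fmap (\<lambda>k. coeff k 0) YK"
definition "V = fmap (\<lambda>k. coeff k 1) YK"

lemma eval_YK: "fmap (\<lambda>f. poly f [:e:]) YK = Yf (Ia a) (A0 + smult e A1) (B0 + smult e B1)"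
  unfolding YK_def
  by (subst Yf_map[where J="Ia a"]) (auto simp: poly_map_Ia)

lemma E_eq: "E = Yf (Ia a) A0 B0"
  unfolding E_def YK_def
  by (subst Yf_map[where J="Ia a"]) (auto simp: coeff_mult_0 coeff_map_poly)

lemma YK_deriv: "map_poly pderiv (YK $ n) = [:A0, A1:] * (YK * YK * YK) $ n + [:B0, B1:] * (YK * YK) $ n"
  unfolding YK_def
  by (rule Yf_deriv) (auto simp: map_poly_map_poly o_def one_pCons map_poly_pCons)

lemma V_deriv: "Dp V = fps_const A1 * (E*E*E) + fps_const A0 * (3 * (E*E*V))
                    + fps_const B1 * (E*E) + fps_const B0 * (2 * (E*V))"
proof (rule fps_ext)
  fix n
  have "Dp V $ n = coeff (map_poly pderiv (YK $ n)) 1"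
    by (simp add: V_def coeff_map_poly)
  also have "\<dots> = coeff ([:A0, A1:] * (YK * YK * YK) $ n + [:B0, B1:] * (YK * YK) $ n) 1"
    by (simp only: YK_deriv)
  also have "\<dots> = (fmap (\<lambda>k. coeff k 1) (fps_const [:A0, A1:] * (YK * YK * YK)
           + fps_const [:B0, B1:] * (YK * YK))) $ n"
    by simp
  also have "fmap (\<lambda>k. coeff k 1) (fps_const [:A0, A1:] * (YK * YK * YK)
           + fps_const [:B0, B1:] * (YK * YK)) = fps_const A1 * (E*E*E) + fps_const A0 * (3 * (E*E*V))
                    + fps_const B1 * (E*E) + fps_const B0 * (2 * (E*V))"
    unfolding fmap_add[of "\<lambda>k. coeff k 1", OF coeff_add] fmap_c1_mult fmap_c0_mult fmap_const_c
      E_def[symmetric] V_def[symmetric]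
    by (simp add: algebra_simps numeral_eq_Suc)
  finally show "Dp V $ n = (fps_const A1 * (E*E*E) + fps_const A0 * (3 * (E*E*V))
                    + fps_const B1 * (E*E) + fps_const B0 * (2 * (E*V))) $ n" .
qed

lemma V_a: "ev a V = 0"
proof (rule fps_ext)
  fix n
  show "ev a V $ n = 0 $ n"
  proof (cases "n \<ge> 2")
    case True
    obtain X where "YK $ n = map_poly (Ia a) X" unfolding YK_def using Yf_rec[OF True] by blast
    then show ?thesis by (simp add: V_def coeff_map_poly)
  next
    case False
    then have "n = 0 \<or> n = 1" by auto
    then show ?thesis by (auto simp: V_def YK_def)
  qed
qed

lemma V_b:
  assumes "infinite S"
    and "\<And>e n. e \<in> S \<Longrightarrow> n \<ge> 2 \<Longrightarrow> poly (Yf (Ia a) (A0 + smult e A1) (B0 + smult e B1) $ n) b = 0"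
  shows "ev b V = 0"
proof (rule fps_ext)
  fix n
  show "ev b V $ n = 0 $ n"
  proof (cases "n \<ge> 2")
    case True
    have "map_poly (\<lambda>f. poly f b) (YK $ n) = 0"
    proof (rule zero_on_infinite[OF assms(1)])
      fix e assume "e \<in> S"
      have "poly (map_poly (\<lambda>f. poly f b) (YK $ n)) e = poly (poly (YK $ n) [:e:]) b"
        by (simp add: poly_poly_swap)
      also have "poly (YK $ n) [:e:] = Yf (Ia a) (A0 + smult e A1) (B0 + smult e B1) $ n"
        by (metis eval_YK fmap_nth)
      finally show "poly (map_poly (\<lambda>f. poly f b) (YK $ n)) e = 0" using assms(2)[OF \<open>e\<in>S\<close> True] by simp
    qed
    then have "coeff (map_poly (\<lambda>f. poly f b) (YK $ n)) 1 = 0" by simp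
    then show ?thesis by (simp add: V_def coeff_map_poly)
  next
    case False
    then have "n = 0 \<or> n = 1" by auto
    then show ?thesis by (auto simp: V_def YK_def)
  qed
qed

end


lemma Dp_Yf: "Dp (Yf (Ia a) A B) = fps_const A * (Yf (Ia a) A B * Yf (Ia a) A B * Yf (Ia a) A B)
     + fps_const B * (Yf (Ia a) A B * Yf (Ia a) A B)"
  by (rule fps_ext) (simp add: Yf_deriv[where d=pderiv])

lemma ev_a_Yf: "ev a (Yf (Ia a) A B) = fps_X"
proof (rule fps_ext)
  fix n
  show "ev a (Yf (Ia a) A B) $ n = fps_X $ n"
  proof (cases "n \<ge> 2")
    case True
    then show ?thesis by (simp add: Yf_rec[OF True] fps_X_nth)
  next
    case False
    then have "n = 0 \<or> n = 1" by auto
    then show ?thesis by (auto simp: fps_X_nth)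
  qed
qed

lemma moments_Q:
  assumes dQ: "pderiv Q = q" and Qa: "poly Q a = 0"
    and Vb: "ev b (family.V a 0 p q 0) = 0"
  shows "contour_integral (linepath a b) (poly (Q^k * p)) = 0"
proof -
  interpret family a b 0 p q 0 .
  have E: "E = Yf (Ia a) 0 q" by (simp add: E_eq)
  define Psi where "Psi = 1 - fps_X * fps_const Q"
  have DE: "Dp E = fps_const q * (E*E)" unfolding E by (simp add: Dp_Yf)
  have DPsi: "Dp Psi = - (fps_X * fps_const q)" by (simp add: Psi_def dQ)
  have EPsi: "E * Psi = fps_X"
  proof -
    define K where "K = E * Psi - fps_X"
    have "Dp K = (fps_const q * E) * K"
      unfolding K_def by (simp add: DE DPsi algebra_simps)
    moreover have "(fps_const q * E) $ 0 = 0" by (simp add: E)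
    moreover have "ev a K = 0" unfolding K_def Psi_def E by (simp add: ev_a_Yf Qa)
    ultimately have "K = 0" by (rule linear_unique)
    then show ?thesis by (simp add: K_def)
  qed
  have Em: "E $ Suc m = Q ^ m" for m
  proof (induction m)
    case 0
    have "(E * Psi) $ 1 = 1" using EPsi by (simp add: fps_X_nth)
    then show ?case by (simp add: Psi_def E fps_mult_nth_1 algebra_simps)
  next
    case (Suc m)
    have "(E * Psi) $ Suc (Suc m) = 0" using EPsi by (simp add: fps_X_nth)
    moreover have "(E * Psi) $ Suc (Suc m) = E $ Suc (Suc m) - Q * E $ Suc m"
    proof -
      have "E * Psi = E - (E * fps_X) * fps_const Q" by (simp add: Psi_def right_diff_distrib mult.assoc)
      then show ?thesis by (simp add: mult.commute)
    qed
    ultimately show ?case using Suc by simp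
  qed
  define u where "u = V * Psi * Psi"
  have DV: "Dp V = fps_const p * (E*E*E) + fps_const q * (2 * (E*V))"
    using V_deriv by simp
  have "Dp u = fps_const p * E * (E*Psi) * (E*Psi) + fps_const q * 2 * V * Psi * (E*Psi - fps_X)"
    unfolding u_def by (simp add: DV DPsi algebra_simps)
  then have Du: "Dp u = fps_const p * E * fps_X * fps_X" by (simp add: EPsi)
  have ua: "ev a u = 0" unfolding u_def by (simp add: V_a)
  have ub: "ev b u = 0" unfolding u_def by (simp add: Vb)
  have "contour_integral (linepath a b) (poly ((fps_const p * E * fps_X * fps_X) $ (k+3))) = poly (u$(k+3)) b"
    by (rule integral_from_D[OF Du ua])
  also have "\<dots> = 0" using ub by (metis ev_nth fps_zero_nth)
  also have "(fps_const p * E * fps_X * fps_X) $ (k+3) = Q^k * p"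
    by (simp add: Em mult.commute)
  finally show ?thesis .
qed


function al :: "nat \<Rightarrow> real" where
  "al n = (if n = 0 then 1 else
     (- (if n = 2 then 2 else 0) - (\<Sum>i\<in>{1..<n}. al i * al (n - i))) / 2)"
  by pat_completeness auto
termination by (relation "Wellfounded.measure id") auto

declare al.simps[simp del]

lemma al_0[simp]: "al 0 = 1" by (simp add: al.simps)

lemma al_odd: "odd n \<Longrightarrow> al n = 0"
proof (induction n rule: less_induct)
  case (less n)
  have "(\<Sum>i\<in>{1..<n}. al i * al (n - i)) = 0"
  proof (intro sum.neutral ballI)
    fix i assume i: "i \<in> {1..<n}"
    show "al i * al (n - i) = 0"
    proof (cases "odd i")
      case True then show ?thesis using less i by auto
    next
      case False
      then have "odd (n - i)" using less.prems i by auto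
      then show ?thesis using less i by auto
    qed
  qed
  moreover have "n \<noteq> 0" "n \<noteq> 2" using less.prems by (auto elim: oddE)
  ultimately show ?case by (subst al.simps) simp
qed

lemma al_2: "al 2 = -1"
proof -
  have "al 1 = 0" by (rule al_odd) simp
  moreover have "{1..<2::nat} = {1}" by auto
  ultimately show ?thesis by (subst al.simps) simp
qed

lemma al_even_neg: "even n \<Longrightarrow> n \<ge> 2 \<Longrightarrow> al n < 0"
proof (induction n rule: less_induct)
  case (less n)
  show ?case
  proof (cases "n = 2")
    case True then show ?thesis by (simp add: al_2)
  next
    case False
    then have n4: "n \<ge> 4" using less.prems by presburger
    have nn: "al i * al (n - i) \<ge> 0" if "i \<in> {1..<n}" for i
    proof (cases "odd i")
      case True then show ?thesis by (simp add: al_odd)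
    next
      case False
      then have ev: "even (n - i)" using less.prems by auto
      show ?thesis
      proof (cases "i \<ge> 2 \<and> n - i \<ge> 2")
        case True
        then have "al i < 0" "al (n-i) < 0" using less that False ev by auto
        then show ?thesis by (simp add: mult_nonpos_nonpos less_imp_le)
      next
        case f2: False
        have "i \<ge> 1" "i < n" using that by auto
        then have "odd i \<or> odd (n - i)" using f2 False ev by presburger
        then show ?thesis using False ev by auto
      qed
    qed
    have "al 2 * al (n - 2) > 0"
      using less.IH[of "n-2"] less.prems n4 al_2 by auto
    moreover have "al 2 * al (n - 2) \<le> (\<Sum>i\<in>{1..<n}. al i * al (n - i))"
      using n4 by (intro member_le_sum nn) auto
    ultimately have "(\<Sum>i\<in>{1..<n}. al i * al (n - i)) > 0" by linarith
    then show ?thesis using False n4 by (subst al.simps) simp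
  qed
qed

lemma al_conv: "(\<Sum>i=0..n. al i * al (n - i)) = (if n = 0 then 1 else if n = 2 then -2 else 0)"
proof (cases "n = 0")
  case True then show ?thesis by simp
next
  case False
  have "{0..n} = insert 0 (insert n {1..<n})" using False by auto
  then have "(\<Sum>i=0..n. al i * al (n - i)) = al n + al n + (\<Sum>i\<in>{1..<n}. al i * al (n - i))"
    using False by simp
  also have "al n = (- (if n = 2 then 2 else 0) - (\<Sum>i\<in>{1..<n}. al i * al (n - i))) / 2"
    using False by (subst al.simps) simp
  finally show ?thesis using False by simp
qed


lemma integral_smult_zero:
  assumes "contour_integral (linepath a b) (poly (smult c F)) = 0" and "c \<noteq> 0"
  shows "contour_integral (linepath a b) (poly F) = 0"
proof -
  have "contour_integral (linepath a b) (poly (smult c F)) = poly (smult c (Ia a F)) b - poly (smult c (Ia a F)) a"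
    by (rule contour_integral_poly) (simp add: pderiv_smult)
  moreover have "contour_integral (linepath a b) (poly F) = poly (Ia a F) b - poly (Ia a F) a"
    by (rule contour_integral_poly) simp
  ultimately show ?thesis using assms by simp
qed

lemma moments_P:
  assumes dP: "pderiv P = p" and Pa: "poly P a = 0"
    and Vb: "ev b (family.V a p 0 0 q) = 0"
  shows "contour_integral (linepath a b) (poly (P^k * q)) = 0"
proof -
  interpret family a b p 0 0 q .
  have E: "E = Yf (Ia a) p 0" by (simp add: E_eq)
  define Phi where "Phi = Abs_fps (\<lambda>n. smult (of_real (al n)) (P ^ (n div 2)))"
  have Phi_nth: "Phi $ n = smult (of_real (al n)) (P ^ (n div 2))" for n
    by (simp add: Phi_def)
  have Phi2: "Phi * Phi = 1 - 2 * fps_const P * fps_X * fps_X"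
  proof (rule fps_ext)
    fix n
    have "(Phi * Phi) $ n = (\<Sum>i=0..n. smult (of_real (al i * al (n - i))) (P ^ (n div 2)))"
      unfolding fps_mult_nth
    proof (intro sum.cong refl)
      fix i assume i: "i \<in> {0..n}"
      show "Phi $ i * Phi $ (n - i) = smult (of_real (al i * al (n - i))) (P ^ (n div 2))"
      proof (cases "even i \<and> even (n - i)")
        case True
        then have "i div 2 + (n - i) div 2 = n div 2" using i by (auto elim!: evenE)
        then have "P ^ (i div 2) * P ^ ((n - i) div 2) = P ^ (n div 2)" by (metis power_add)
        then show ?thesis by (simp add: Phi_nth mult.commute)
      next
        case False
        then have "odd i \<or> odd (n - i)" by blast
        then have "al i = 0 \<or> al (n - i) = 0" using al_odd by blast
        then show ?thesis by (auto simp: Phi_nth)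
      qed
    qed
    also have "\<dots> = smult (of_real (\<Sum>i=0..n. al i * al (n - i))) (P ^ (n div 2))"
      by (simp add: smult_sum of_real_sum)
    also have "\<dots> = (1 - 2 * fps_const P * fps_X * fps_X) $ n"
      by (cases "n = 2") (auto simp: al_conv fps_X_nth fps_numeral_nth numeral_mult_conv_smult)
    finally show "(Phi * Phi) $ n = (1 - 2 * fps_const P * fps_X * fps_X) $ n" .
  qed
  have DE: "Dp E = fps_const p * (E*E*E)" unfolding E by (simp add: Dp_Yf)
  have two: "Dp (2 :: complex poly fps) = 0"
    by (rule fps_ext) (simp add: fps_numeral_nth pderiv_pCons numeral_2_eq_2 one_pCons)
  have PhiDPhi: "Phi * Dp Phi = - (fps_const p * fps_X * fps_X)"
  proof -
    have "Dp (Phi * Phi) = Dp (1 - 2 * fps_const P * fps_X * fps_X)" by (simp only: Phi2)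
    then have "2 * (Phi * Dp Phi) = 2 * (- (fps_const p * fps_X * fps_X))"
      by (simp add: two dP algebra_simps)
    moreover have "(2::complex poly fps) \<noteq> 0"
    proof
      assume "(2::complex poly fps) = 0"
      then have "(2::complex poly fps) $ 0 = 0" by simp
      then show False by (simp add: fps_numeral_nth)
    qed
    ultimately show ?thesis by (metis mult_cancel_left)
  qed
  have EE: "E * E * (1 - 2 * fps_const P * fps_X * fps_X) = fps_X * fps_X"
  proof -
    define K where "K = E * E * (1 - 2 * fps_const P * fps_X * fps_X) - fps_X * fps_X"
    have "Dp K = (2 * fps_const p * E * E) * K"
      unfolding K_def by (simp add: DE two dP algebra_simps)
    moreover have "(2 * fps_const p * E * E) $ 0 = 0" by (simp add: E)
    moreover have "ev a K = 0" unfolding K_def E by (simp add: ev_a_Yf Pa)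
    ultimately have "K = 0" by (rule linear_unique)
    then show ?thesis by (simp add: K_def)
  qed
  have EPhi: "E * Phi = fps_X"
  proof -
    have "(E * Phi - fps_X) * (E * Phi + fps_X) = E * E * (Phi * Phi) - fps_X * fps_X"
      by (simp add: algebra_simps)
    also have "\<dots> = 0" using EE by (simp add: Phi2)
    finally have "(E * Phi - fps_X) * (E * Phi + fps_X) = 0" .
    moreover have "(E * Phi + fps_X) $ 1 = 2"
      by (simp add: E Phi_nth fps_mult_nth_1 fps_X_nth)
    then have "E * Phi + fps_X \<noteq> 0" by (metis fps_zero_nth zero_neq_numeral)
    ultimately show ?thesis by simp
  qed
  define R where "R = V * Phi * Phi * Phi"
  have DV: "Dp V = fps_const p * (3 * (E*E*V)) + fps_const q * (E*E)"
    using V_deriv by simp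
  have "Dp R = 3 * V * Phi * (fps_const p * (E*Phi) * (E*Phi) + Phi * Dp Phi)
               + fps_const q * (E*Phi) * (E*Phi) * Phi"
    unfolding R_def by (simp add: DV algebra_simps)
  then have DR: "Dp R = fps_const q * fps_X * fps_X * Phi" by (simp add: EPhi PhiDPhi)
  have Ra: "ev a R = 0" unfolding R_def by (simp add: V_a)
  have Rb: "ev b R = 0" unfolding R_def by (simp add: Vb)
  have "contour_integral (linepath a b) (poly ((fps_const q * fps_X * fps_X * Phi) $ (2*k+2))) = poly (R$(2*k+2)) b"
    by (rule integral_from_D[OF DR Ra])
  also have "\<dots> = 0" using Rb by (metis ev_nth fps_zero_nth)
  also have "(fps_const q * fps_X * fps_X * Phi) $ (2*k+2) = smult (of_real (al (2*k))) (P^k * q)"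
  proof -
    have eq: "fps_const q * fps_X * fps_X * Phi = fps_X * (fps_X * (fps_const q * Phi))" by (simp add: algebra_simps)
    have "(fps_const q * fps_X * fps_X * Phi) $ (2*k+2) = q * Phi $ (2*k)"
      by (simp only: eq fps_X_mult_nth fps_mult_left_const_nth) simp
    also have "\<dots> = smult (of_real (al (2*k))) (P^k * q)"
      by (simp add: Phi_nth mult.commute)
    finally show ?thesis .
  qed
  finally have "contour_integral (linepath a b) (poly (smult (of_real (al (2*k))) (P^k * q))) = 0" .
  moreover have "(of_real (al (2*k)) :: complex) \<noteq> 0"
  proof (cases k)
    case 0 then show ?thesis by simp
  next
    case (Suc m) then have "al (2*k) < 0" by (intro al_even_neg) auto
    then show ?thesis by simp
  qed
  ultimately show ?thesis by (rule integral_smult_zero)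
qed




lemma ode_unique:
  fixes Y1 Y2 P Q :: "real \<Rightarrow> complex" and c :: complex
  assumes cP: "continuous_on {0..1} P" and cQ: "continuous_on {0..1} Q"
    and d1: "\<And>t. t \<in> {0..1} \<Longrightarrow> (Y1 has_vector_derivative (c * (P t * (Y1 t)^3 + Q t * (Y1 t)^2))) (at t within {0..1})"
    and d2: "\<And>t. t \<in> {0..1} \<Longrightarrow> (Y2 has_vector_derivative (c * (P t * (Y2 t)^3 + Q t * (Y2 t)^2))) (at t within {0..1})"
    and e0: "Y1 0 = Y2 0"
  shows "Y1 1 = Y2 1"
proof -
  define A where "A t = c * (P t * ((Y1 t)^2 + Y1 t * Y2 t + (Y2 t)^2) + Q t * (Y1 t + Y2 t))" for t
  have c1: "continuous_on {0..1} Y1" by (rule continuous_on_vector_derivative[OF d1])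
  have c2: "continuous_on {0..1} Y2" by (rule continuous_on_vector_derivative[OF d2])
  have cA: "continuous_on {0..1} A" unfolding A_def
    by (intro continuous_intros cP cQ c1 c2)
  define Ai where "Ai u = integral {0..u} A" for u
  define G where "G t = (Y1 t - Y2 t) * exp (- Ai t)" for t
  have dG: "(G has_vector_derivative 0) (at t within {0..1})" if t: "t \<in> {0..1}" for t
  proof -
    have dAi: "(Ai has_vector_derivative A t) (at t within {0..1})"
      unfolding Ai_def by (rule integral_has_vector_derivative[OF cA t])
    have dmAi: "((\<lambda>t. - Ai t) has_vector_derivative - A t) (at t within {0..1})"
      by (rule has_vector_derivative_minus[OF dAi])
    have "((exp \<circ> (\<lambda>t. - Ai t)) has_vector_derivative (- A t * exp (- Ai t))) (at t within {0..1})"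
      by (rule field_vector_diff_chain_within[OF dmAi]) (auto intro: DERIV_exp has_field_derivative_at_within)
    then have dE: "((\<lambda>t. exp (- Ai t)) has_vector_derivative (- A t * exp (- Ai t))) (at t within {0..1})"
      by (simp add: o_def)
    have dD: "((\<lambda>t. Y1 t - Y2 t) has_vector_derivative (A t * (Y1 t - Y2 t))) (at t within {0..1})"
    proof -
      have "((\<lambda>t. Y1 t - Y2 t) has_vector_derivative
          (c * (P t * (Y1 t)^3 + Q t * (Y1 t)^2) - c * (P t * (Y2 t)^3 + Q t * (Y2 t)^2))) (at t within {0..1})"
        by (rule has_vector_derivative_diff[OF d1[OF t] d2[OF t]])
      moreover have "c * (P t * (Y1 t)^3 + Q t * (Y1 t)^2) - c * (P t * (Y2 t)^3 + Q t * (Y2 t)^2) = A t * (Y1 t - Y2 t)"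
        unfolding A_def by (simp add: algebra_simps power2_eq_square power3_eq_cube)
      ultimately show ?thesis by simp
    qed
    have "(G has_vector_derivative ((Y1 t - Y2 t) * (- A t * exp (- Ai t)) + A t * (Y1 t - Y2 t) * exp (- Ai t))) (at t within {0..1})"
      unfolding G_def by (rule has_vector_derivative_mult[OF dD dE])
    then show ?thesis by (simp add: algebra_simps)
  qed
  obtain k where k: "\<And>t. t \<in> {0..1} \<Longrightarrow> G t = k"
    using has_vector_derivative_zero_constant[of "{0..1::real}" G] dG by auto
  have "G 1 = G 0" using k by auto
  also have "G 0 = 0" by (simp add: G_def e0)
  finally show ?thesis by (simp add: G_def)
qed





definition tr :: "nat \<Rightarrow> 'a::zero fps \<Rightarrow> 'a fps" where
  "tr n f = Abs_fps (\<lambda>i. if i < n then f $ i else 0)"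

lemma tr_nth[simp]: "tr n f $ i = (if i < n then f $ i else 0)"
  by (simp add: tr_def)

lemma nonneg_mult:
  fixes f g :: "real fps"
  assumes "\<And>i. f $ i \<ge> 0" "\<And>i. g $ i \<ge> 0"
  shows "(f * g) $ n \<ge> 0"
  unfolding fps_mult_nth using assms by (intro sum_nonneg) auto

lemma M_nonneg:
  assumes "L \<ge> 0"
  shows "Yf (\<lambda>x. x) L L $ n \<ge> (0::real)"
proof (induction n rule: less_induct)
  case (less n)
  let ?M = "Yf (\<lambda>x. x) L L"
  show ?case
  proof (cases "n \<ge> 2")
    case True
    have t0: "tr n ?M $ 0 = 0" by simp
    have ag: "\<And>i. i < n \<Longrightarrow> tr n ?M $ i = ?M $ i" by simp
    have nn: "\<And>i. tr n ?M $ i \<ge> 0" using less.IH by (metis tr_nth order_refl)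
    have "(?M * ?M * ?M) $ n = (tr n ?M * tr n ?M * tr n ?M) $ n"
      by (rule trunc3[symmetric]) (use ag in auto)
    moreover have "(?M * ?M) $ n = (tr n ?M * tr n ?M) $ n"
      by (rule trunc2[symmetric]) (use ag in auto)
    moreover have "(tr n ?M * tr n ?M * tr n ?M) $ n \<ge> 0" "(tr n ?M * tr n ?M) $ n \<ge> 0"
      using nn by (auto intro!: nonneg_mult)
    ultimately show ?thesis using assms by (simp add: Yf_rec[OF True])
  next
    case False
    then have "n = 0 \<or> n = 1" by auto
    then show ?thesis by auto
  qed
qed

lemma dom_mult:
  fixes f g :: "complex poly fps" and F G :: "real fps"
  assumes "\<And>i. cmod (poly (f$i) z) \<le> F$i" "\<And>i. cmod (poly (g$i) z) \<le> G$i"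
  shows "cmod (poly ((f*g)$n) z) \<le> (F*G)$n"
proof -
  have "poly ((f*g)$n) z = (ev z f * ev z g) $ n" by (metis ev_mult ev_nth)
  also have "\<dots> = (\<Sum>i=0..n. poly (f$i) z * poly (g$(n-i)) z)" by (simp add: fps_mult_nth)
  finally have "cmod (poly ((f*g)$n) z) \<le> (\<Sum>i=0..n. cmod (poly (f$i) z) * cmod (poly (g$(n-i)) z))"
    by (metis (no_types, lifting) norm_mult norm_sum sum.cong)
  also have "\<dots> \<le> (\<Sum>i=0..n. F$i * G$(n-i))"
    using assms by (intro sum_mono mult_mono) (auto intro: order_trans[OF norm_ge_zero])
  finally show ?thesis by (simp add: fps_mult_nth)
qed

locale anal =
  fixes p q :: "complex poly" and a b :: complex
begin

definition "Y = Yf (Ia a) p q"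
definition "Sg = closed_segment a b"

lemma bound_exists: "\<exists>B\<ge>0. \<forall>z\<in>Sg. cmod (poly p z) \<le> B \<and> cmod (poly q z) \<le> B"
proof -
  have "compact ((\<lambda>z. cmod (poly p z) + cmod (poly q z)) ` Sg)"
    unfolding Sg_def by (intro compact_continuous_image continuous_intros) auto
  then obtain B where B: "\<forall>x\<in>(\<lambda>z. cmod (poly p z) + cmod (poly q z)) ` Sg. norm x \<le> B"
    using compact_imp_bounded bounded_iff by metis
  have "\<forall>z\<in>Sg. cmod (poly p z) \<le> B \<and> cmod (poly q z) \<le> B"
  proof
    fix z assume "z \<in> Sg"
    then have "norm (cmod (poly p z) + cmod (poly q z)) \<le> B" using B by auto
    then have "cmod (poly p z) + cmod (poly q z) \<le> B"
      using norm_ge_zero[of "poly p z"] norm_ge_zero[of "poly q z"] by (simp add: real_norm_def)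
    then show "cmod (poly p z) \<le> B \<and> cmod (poly q z) \<le> B"
      using norm_ge_zero[of "poly p z"] norm_ge_zero[of "poly q z"] by linarith
  qed
  moreover have "B \<ge> 0" using B unfolding Sg_def by (metis (no_types, lifting) ends_in_segment(1) image_eqI norm_ge_zero order_trans)
  ultimately show ?thesis by blast
qed

definition "B = (SOME B. B \<ge> 0 \<and> (\<forall>z\<in>Sg. cmod (poly p z) \<le> B \<and> cmod (poly q z) \<le> B))"

lemma B: "B \<ge> 0" "\<And>z. z \<in> Sg \<Longrightarrow> cmod (poly p z) \<le> B" "\<And>z. z \<in> Sg \<Longrightarrow> cmod (poly q z) \<le> B"
  using someI_ex[OF bound_exists] unfolding B_def by auto

definition "L = cmod (b - a) * B + 1"

lemma L_ge1: "L \<ge> 1" using B by (simp add: L_def)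

definition "M = Yf (\<lambda>x. x) L L"

lemma M_nn: "M $ n \<ge> 0"
  unfolding M_def by (rule M_nonneg) (use L_ge1 in auto)

lemma c_bound: "z \<in> Sg \<Longrightarrow> cmod (poly (Y $ n) z) \<le> M $ n"
proof (induction n arbitrary: z rule: less_induct)
  case (less n)
  show ?case
  proof (cases "n \<ge> 2")
    case True
    let ?TY = "tr n Y" and ?TM = "tr n M"
    have dom: "cmod (poly (?TY $ i) w) \<le> ?TM $ i" if "w \<in> Sg" for i w
      using less.IH that by (auto simp: M_nn)
    have Y3: "(Y*Y*Y)$n = (?TY*?TY*?TY)$n" by (rule trunc3[symmetric]) (auto simp: Y_def)
    have Y2: "(Y*Y)$n = (?TY*?TY)$n" by (rule trunc2[symmetric]) (auto simp: Y_def)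
    have M3: "(M*M*M)$n = (?TM*?TM*?TM)$n" by (rule trunc3[symmetric]) (auto simp: M_def)
    have M2: "(M*M)$n = (?TM*?TM)$n" by (rule trunc2[symmetric]) (auto simp: M_def)
    define F where "F = p * (Y*Y*Y)$n + q * (Y*Y)$n"
    define K where "K = B * ((M*M*M)$n + (M*M)$n)"
    have YF: "Y $ n = Ia a F" unfolding F_def Y_def by (rule Yf_rec[OF True])
    have Fb: "cmod (poly F w) \<le> K" if w: "w \<in> Sg" for w
    proof -
      have d2: "\<And>i. cmod (poly ((?TY*?TY)$i) w) \<le> (?TM*?TM)$i"
        by (rule dom_mult) (use dom w in auto)
      have "cmod (poly ((Y*Y*Y)$n) w) \<le> (M*M*M)$n"
        unfolding Y3 M3 by (rule dom_mult) (use dom w d2 in auto)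
      moreover have "cmod (poly ((Y*Y)$n) w) \<le> (M*M)$n"
        unfolding Y2 M2 by (rule dom_mult) (use dom w in auto)
      moreover have "cmod (poly F w) \<le> cmod (poly p w) * cmod (poly ((Y*Y*Y)$n) w) + cmod (poly q w) * cmod (poly ((Y*Y)$n) w)"
        unfolding F_def by (simp add: norm_mult[symmetric] norm_triangle_ineq)
      moreover have "cmod (poly p w) * cmod (poly ((Y*Y*Y)$n) w) \<le> B * (M*M*M)$n"
        using calculation(1) B(2)[OF w] B(1) by (intro mult_mono) auto
      moreover have "cmod (poly q w) * cmod (poly ((Y*Y)$n) w) \<le> B * (M*M)$n"
        using calculation(2) B(3)[OF w] B(1) by (intro mult_mono) auto
      ultimately show ?thesis unfolding K_def by (simp add: distrib_left)
    qed
    have "cmod (poly (Ia a F) z - poly (Ia a F) a) \<le> K * cmod (z - a)"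
    proof (rule field_differentiable_bound[where S=Sg])
      show "convex Sg" by (simp add: Sg_def)
      show "\<And>w. w \<in> Sg \<Longrightarrow> ((poly (Ia a F)) has_field_derivative poly F w) (at w within Sg)"
        by (metis pderiv_Ia poly_DERIV has_field_derivative_at_within)
      show "\<And>w. w \<in> Sg \<Longrightarrow> cmod (poly F w) \<le> K" by (rule Fb)
      show "z \<in> Sg" "a \<in> Sg" using less.prems by (auto simp: Sg_def)
    qed
    moreover have "K \<ge> 0" unfolding K_def using B(1) by (intro mult_nonneg_nonneg add_nonneg_nonneg nonneg_mult M_nn) auto
    moreover have "cmod (z - a) \<le> cmod (b - a)" using less.prems segment_bound1[of z a b] by (simp add: Sg_def)
    ultimately have "cmod (poly (Y $ n) z) \<le> K * cmod (b - a)"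
      unfolding YF by (metis poly_Ia_a diff_zero mult_left_mono order_trans)
    also have "\<dots> \<le> L * ((M*M*M)$n + (M*M)$n)"
    proof -
      have "(M*M*M)$n + (M*M)$n \<ge> 0" by (intro add_nonneg_nonneg nonneg_mult M_nn)
      then show ?thesis unfolding K_def L_def by (simp add: algebra_simps)
    qed
    also have "\<dots> = M $ n" unfolding M_def by (simp add: Yf_rec[OF True] algebra_simps)
    finally show ?thesis .
  next
    case False
    then have "n = 0 \<or> n = 1" by auto
    then show ?thesis by (auto simp: Y_def M_def)
  qed
qed


lemma M_eq: "M $ i = (if i = 1 then 1 else 0) + L * (M*M*M) $ i + L * (M*M) $ i"
proof (cases "i \<ge> 2")
  case True then show ?thesis unfolding M_def by (simp add: Yf_rec[OF True])
next
  case False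
  then have "i = 0 \<or> i = 1" by auto
  then show ?thesis by (auto simp: M_def fps_mult_nth_1)
qed

end

lemma partial_le:
  fixes Q :: "real poly"
  assumes "\<And>i. coeff Q i \<ge> 0" "r \<ge> 0"
  shows "(\<Sum>i\<le>N. coeff Q i * r^i) \<le> poly Q r"
proof -
  have "poly Q r = (\<Sum>i\<le>max N (degree Q). coeff Q i * r^i)"
    unfolding poly_altdef by (rule sum.mono_neutral_left) (auto simp: coeff_eq_0)
  moreover have "(\<Sum>i\<le>N. coeff Q i * r^i) \<le> (\<Sum>i\<le>max N (degree Q). coeff Q i * r^i)"
    using assms by (intro sum_mono2) auto
  ultimately show ?thesis by simp
qed

lemma coeff_mult_nonneg:
  fixes P Q :: "real poly"
  assumes "\<And>i. coeff P i \<ge> 0" "\<And>i. coeff Q i \<ge> 0"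
  shows "coeff (P * Q) n \<ge> 0"
  unfolding coeff_mult using assms by (intro sum_nonneg) auto

context anal
begin

definition "r = 1 / (16 * L)"

lemma r_pos: "r > 0" using L_ge1 by (simp add: r_def)

lemma partial_M: "(\<Sum>i<N. M $ i * r ^ i) \<le> 2 * r"
proof (induction N)
  case 0 then show ?case using r_pos by simp
next
  case (Suc N)
  define T where "T = (\<Sum>i<N. monom (M $ i) i)"
  have cT: "coeff T i = (if i < N then M $ i else 0)" for i
    unfolding T_def by (simp add: coeff_sum)
  have pT: "poly T r = (\<Sum>i<N. M $ i * r ^ i)"
    unfolding T_def by (simp add: poly_sum poly_monom)
  have Tnn: "\<And>i. coeff T i \<ge> 0" using M_nn by (simp add: cT)
  define Q where "Q = monom 1 1 + smult L (T*T*T) + smult L (T*T)"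
  have cQ: "M $ i = coeff Q i" if "i \<le> N" for i
  proof -
    let ?F = "fps_of_poly T"
    have ag: "\<And>j. j < i \<Longrightarrow> ?F $ j = M $ j" using that by (simp add: cT)
    have "(M*M*M)$i = (?F*?F*?F)$i" by (rule trunc3[symmetric]) (use ag in \<open>auto simp: cT M_def\<close>)
    also have "\<dots> = coeff (T*T*T) i" by (simp flip: fps_of_poly_mult)
    finally have 3: "(M*M*M)$i = coeff (T*T*T) i" .
    have "(M*M)$i = (?F*?F)$i" by (rule trunc2[symmetric]) (use ag in \<open>auto simp: cT M_def\<close>)
    also have "\<dots> = coeff (T*T) i" by (simp flip: fps_of_poly_mult)
    finally have 2: "(M*M)$i = coeff (T*T) i" .
    show ?thesis by (subst M_eq) (simp add: Q_def 2 3 coeff_monom)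
  qed
  have Qnn: "\<And>i. coeff Q i \<ge> 0"
    unfolding Q_def using L_ge1 Tnn
    by (auto simp: coeff_monom intro!: add_nonneg_nonneg mult_nonneg_nonneg coeff_mult_nonneg)
  have "(\<Sum>i<Suc N. M $ i * r ^ i) = (\<Sum>i\<le>N. coeff Q i * r ^ i)"
    unfolding lessThan_Suc_atMost by (intro sum.cong) (auto simp: cQ)
  also have "\<dots> \<le> poly Q r" by (rule partial_le[OF Qnn]) (use r_pos in auto)
  also have "poly Q r = r + L * (poly T r)^3 + L * (poly T r)^2"
    by (simp add: Q_def poly_monom power3_eq_cube power2_eq_square)
  also have "\<dots> \<le> r + L * (2*r)^3 + L * (2*r)^2"
  proof -
    have "poly T r \<ge> 0" unfolding pT using M_nn r_pos by (intro sum_nonneg) auto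
    moreover have "poly T r \<le> 2 * r" using Suc pT by simp
    ultimately show ?thesis using L_ge1
      by (intro add_mono mult_left_mono power_mono) auto
  qed
  also have "\<dots> \<le> 2 * r"
  proof -
    have Lr: "L * r = 1/16" using L_ge1 by (simp add: r_def)
    have r1: "r \<le> 1/16" using L_ge1 by (simp add: r_def field_simps)
    have "L * (2*r)^3 + L * (2*r)^2 = (L * r) * (8 * r^2 + 4 * r)" by (simp add: algebra_simps power2_eq_square power3_eq_cube)
    also have "\<dots> = (8 * r^2 + 4 * r) / 16" by (simp add: Lr)
    also have "\<dots> \<le> r" using r1 r_pos by (simp add: power2_eq_square)
    finally show ?thesis by simp
  qed
  finally show ?case .
qed

lemma M_summable: "summable (\<lambda>n. M $ n * r ^ n)"
  by (rule summableI_nonneg_bounded[where x="2*r"]) (use M_nn r_pos partial_M in auto)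

lemma M2_le: "L * ((M*M) $ n) \<le> M $ n" and M3_le: "L * ((M*M*M) $ n) \<le> M $ n"
proof -
  have "(M*M)$n \<ge> 0" "(M*M*M)$n \<ge> 0" by (intro nonneg_mult M_nn)+
  moreover have "M $ n = (if n = 1 then 1 else 0) + L * (M*M*M) $ n + L * (M*M) $ n" by (rule M_eq)
  ultimately show "L * ((M*M) $ n) \<le> M $ n" "L * ((M*M*M) $ n) \<le> M $ n"
    using L_ge1 by (auto simp: add_increasing)
qed

lemma M2_summable: "summable (\<lambda>n. (M*M) $ n * r ^ n)"
proof (rule summable_comparison_test'[OF summable_mult[OF M_summable, of "1/L"]])
  fix n
  have "(M*M)$n \<ge> 0" by (intro nonneg_mult M_nn)
  then have "norm ((M*M) $ n * r ^ n) = (M*M)$n * r^n" using r_pos by simp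
  also have "\<dots> \<le> (1/L) * (M $ n * r ^ n)"
    using M2_le[of n] L_ge1 r_pos by (simp add: field_simps)
  finally show "norm ((M*M) $ n * r ^ n) \<le> 1 / L * (M $ n * r ^ n)" .
qed

lemma M3_summable: "summable (\<lambda>n. (M*M*M) $ n * r ^ n)"
proof (rule summable_comparison_test'[OF summable_mult[OF M_summable, of "1/L"]])
  fix n
  have "(M*M*M)$n \<ge> 0" by (intro nonneg_mult M_nn)
  then have "norm ((M*M*M) $ n * r ^ n) = (M*M*M)$n * r^n" using r_pos by simp
  also have "\<dots> \<le> (1/L) * (M $ n * r ^ n)"
    using M3_le[of n] L_ge1 r_pos by (simp add: field_simps)
  finally show "norm ((M*M*M) $ n * r ^ n) \<le> 1 / L * (M $ n * r ^ n)" .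
qed

end

lemma cauchy_ev:
  fixes f g :: "complex poly fps"
  assumes "summable (\<lambda>k. norm (poly (f$k) z * y^k))" "summable (\<lambda>k. norm (poly (g$k) z * y^k))"
  shows "(\<Sum>k. poly (f$k) z * y^k) * (\<Sum>k. poly (g$k) z * y^k) = (\<Sum>k. poly ((f*g)$k) z * y^k)"
proof -
  have "(\<Sum>k. poly (f$k) z * y^k) * (\<Sum>k. poly (g$k) z * y^k)
      = (\<Sum>k. \<Sum>i\<le>k. (poly (f$i) z * y^i) * (poly (g$(k-i)) z * y^(k-i)))"
    by (rule Cauchy_product[OF assms])
  also have "\<dots> = (\<Sum>k. poly ((f*g)$k) z * y^k)"
  proof (rule suminf_cong)
    fix k
    have "poly ((f*g)$k) z = (ev z f * ev z g) $ k" by (metis ev_mult ev_nth)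
    also have "\<dots> = (\<Sum>i\<le>k. poly (f$i) z * poly (g$(k-i)) z)" by (simp add: fps_mult_nth atLeast0AtMost)
    finally have "poly ((f*g)$k) z * y^k = (\<Sum>i\<le>k. poly (f$i) z * poly (g$(k-i)) z * y^k)"
      by (simp add: sum_distrib_right)
    also have "\<dots> = (\<Sum>i\<le>k. (poly (f$i) z * y^i) * (poly (g$(k-i)) z * y^(k-i)))"
    proof (intro sum.cong refl)
      fix i assume "i \<in> {..k}"
      then have "y^k = y^i * y^(k-i)" by (simp add: power_add[symmetric])
      then show "poly (f$i) z * poly (g$(k-i)) z * y^k = (poly (f$i) z * y^i) * (poly (g$(k-i)) z * y^(k-i))"
        by (simp add: algebra_simps)
    qed
    finally show "(\<Sum>i\<le>k. (poly (f$i) z * y^i) * (poly (g$(k-i)) z * y^(k-i))) = poly ((f*g)$k) z * y^k" by simp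
  qed
  finally show ?thesis .
qed

context anal
begin

lemma dY2: "z \<in> Sg \<Longrightarrow> cmod (poly ((Y*Y)$i) z) \<le> (M*M)$i"
  by (rule dom_mult) (auto intro: c_bound)

lemma dY3: "z \<in> Sg \<Longrightarrow> cmod (poly ((Y*Y*Y)$i) z) \<le> (M*M*M)$i"
  by (rule dom_mult) (auto intro: c_bound dY2)

lemma term_bound:
  assumes "cmod y \<le> r" "cmod (x::complex) \<le> F" "F \<ge> 0"
  shows "cmod (x * y^n) \<le> F * r^n"
  using assms by (simp add: norm_mult norm_power mult_mono power_mono)

lemma sY1: "z \<in> Sg \<Longrightarrow> cmod y \<le> r \<Longrightarrow> summable (\<lambda>k. norm (poly (Y$k) z * y^k))"
  by (rule summable_comparison_test'[OF M_summable]) (auto intro!: term_bound c_bound M_nn)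

lemma sY2: "z \<in> Sg \<Longrightarrow> cmod y \<le> r \<Longrightarrow> summable (\<lambda>k. norm (poly ((Y*Y)$k) z * y^k))"
  by (rule summable_comparison_test'[OF M2_summable]) (auto intro!: term_bound dY2 nonneg_mult M_nn)

lemma sY3: "z \<in> Sg \<Longrightarrow> cmod y \<le> r \<Longrightarrow> summable (\<lambda>k. norm (poly ((Y*Y*Y)$k) z * y^k))"
  by (rule summable_comparison_test'[OF M3_summable]) (auto intro!: term_bound dY3 nonneg_mult M_nn)

lemma pderiv_Y: "pderiv (Y$n) = p * (Y*Y*Y)$n + q * (Y*Y)$n"
  unfolding Y_def by (rule Yf_deriv) auto

lemma exist:
  assumes y0: "cmod y0 \<le> r"
  shows "\<exists>Sol. Sol 0 = y0 \<and> (\<lambda>n. poly (Y$n) b * y0^n) sums Sol 1 \<and>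
    (\<forall>t\<in>{0..1}. (Sol has_vector_derivative ((b - a) * (poly p (a + of_real t * (b - a)) * (Sol t)^3
        + poly q (a + of_real t * (b - a)) * (Sol t)^2))) (at t within {0..1}))"
proof -
  define f where "f n z = poly (Y$n) z * y0^n" for n z
  define f' where "f' n z = poly (pderiv (Y$n)) z * y0^n" for n z
  have df: "(f n has_field_derivative f' n z) (at z within Sg)" for n z
    unfolding f_def f'_def by (intro derivative_eq_intros) auto
  have ul: "uniform_limit Sg (\<lambda>n z. \<Sum>i<n. f' i z) (\<lambda>z. suminf (\<lambda>i. f' i z)) sequentially"
  proof (rule Weierstrass_m_test)
    show "summable (\<lambda>n. B * ((M*M*M) $ n * r^n) + B * ((M*M) $ n * r^n))"
      by (intro summable_add summable_mult M2_summable M3_summable)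
    fix n z assume z: "z \<in> Sg"
    have "norm (f' n z) = cmod (poly p z * poly ((Y*Y*Y)$n) z * y0^n + poly q z * poly ((Y*Y)$n) z * y0^n)"
      by (simp add: f'_def pderiv_Y algebra_simps)
    also have "\<dots> \<le> cmod (poly p z * poly ((Y*Y*Y)$n) z * y0^n) + cmod (poly q z * poly ((Y*Y)$n) z * y0^n)"
      by (rule norm_triangle_ineq)
    also have "\<dots> \<le> B * ((M*M*M) $ n * r^n) + B * ((M*M) $ n * r^n)"
    proof (intro add_mono)
      have "cmod (poly ((Y*Y*Y)$n) z * y0^n) \<le> (M*M*M) $ n * r^n"
        using z y0 by (intro term_bound dY3 nonneg_mult M_nn)
      moreover have "cmod (poly p z * poly ((Y*Y*Y)$n) z * y0^n) = cmod (poly p z) * cmod (poly ((Y*Y*Y)$n) z * y0^n)"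
        by (simp add: norm_mult)
      ultimately show "cmod (poly p z * poly ((Y*Y*Y)$n) z * y0^n) \<le> B * ((M*M*M) $ n * r^n)"
        using B(1) B(2)[OF z] by (metis mult_mono norm_ge_zero)
      have "cmod (poly ((Y*Y)$n) z * y0^n) \<le> (M*M) $ n * r^n"
        using z y0 by (intro term_bound dY2 nonneg_mult M_nn)
      moreover have "cmod (poly q z * poly ((Y*Y)$n) z * y0^n) = cmod (poly q z) * cmod (poly ((Y*Y)$n) z * y0^n)"
        by (simp add: norm_mult)
      ultimately show "cmod (poly q z * poly ((Y*Y)$n) z * y0^n) \<le> B * ((M*M) $ n * r^n)"
        using B(1) B(3)[OF z] by (metis mult_mono norm_ge_zero)
    qed
    finally show "norm (f' n z) \<le> B * ((M*M*M) $ n * r^n) + B * ((M*M) $ n * r^n)" .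
  qed
  have aS: "a \<in> Sg" "b \<in> Sg" by (auto simp: Sg_def)
  have sa: "summable (\<lambda>n. f n a)"
    unfolding f_def by (rule summable_norm_cancel[OF sY1[OF aS(1) y0]])
  obtain g where g: "\<And>z. z \<in> Sg \<Longrightarrow> (\<lambda>n. f n z) sums g z"
      "\<And>z. z \<in> Sg \<Longrightarrow> (g has_field_derivative (\<Sum>i. f' i z)) (at z within Sg)"
    using has_field_derivative_series[OF _ df ul aS(1) sa] by (auto simp: Sg_def)
  have g': "(\<Sum>i. f' i z) = poly p z * (g z)^3 + poly q z * (g z)^2" if z: "z \<in> Sg" for z
  proof -
    have gz: "g z = (\<Sum>k. poly (Y$k) z * y0^k)" using g(1)[OF z] unfolding f_def by (simp add: sums_iff)
    have 2: "(g z)^2 = (\<Sum>k. poly ((Y*Y)$k) z * y0^k)"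
      unfolding gz power2_eq_square by (rule cauchy_ev[OF sY1[OF z y0] sY1[OF z y0]])
    have 3: "(g z)^3 = (\<Sum>k. poly ((Y*Y*Y)$k) z * y0^k)"
      unfolding power3_eq_cube 2[unfolded power2_eq_square] mult.assoc[symmetric]
      by (subst gz, rule cauchy_ev[OF sY2[OF z y0] sY1[OF z y0]])
    have s2: "summable (\<lambda>k. poly ((Y*Y)$k) z * y0^k)" by (rule summable_norm_cancel[OF sY2[OF z y0]])
    have s3: "summable (\<lambda>k. poly ((Y*Y*Y)$k) z * y0^k)" by (rule summable_norm_cancel[OF sY3[OF z y0]])
    have "(\<Sum>i. f' i z) = (\<Sum>i. poly p z * (poly ((Y*Y*Y)$i) z * y0^i) + poly q z * (poly ((Y*Y)$i) z * y0^i))"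
      by (simp add: f'_def pderiv_Y algebra_simps)
    also have "\<dots> = poly p z * (\<Sum>i. poly ((Y*Y*Y)$i) z * y0^i) + poly q z * (\<Sum>i. poly ((Y*Y)$i) z * y0^i)"
    proof -
      have "(\<Sum>i. poly p z * (poly ((Y*Y*Y)$i) z * y0^i) + poly q z * (poly ((Y*Y)$i) z * y0^i))
          = (\<Sum>i. poly p z * (poly ((Y*Y*Y)$i) z * y0^i)) + (\<Sum>i. poly q z * (poly ((Y*Y)$i) z * y0^i))"
        by (rule suminf_add[symmetric]) (intro summable_mult s3, intro summable_mult s2)
      also have "\<dots> = poly p z * (\<Sum>i. poly ((Y*Y*Y)$i) z * y0^i) + poly q z * (\<Sum>i. poly ((Y*Y)$i) z * y0^i)"
        by (simp add: suminf_mult s2 s3)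
      finally show ?thesis .
    qed
    finally show ?thesis by (simp add: 2 3)
  qed
  define xt where "xt t = a + of_real t * (b - a)" for t :: real
  have xtS: "xt ` {0..1} \<subseteq> Sg"
  proof
    fix w assume "w \<in> xt ` {0..1}"
    then obtain t where t: "t \<in> {0..1}" "w = xt t" by auto
    have "w = (1 - t) *\<^sub>R a + t *\<^sub>R b" using t by (simp add: xt_def scaleR_conv_of_real algebra_simps)
    then show "w \<in> Sg" unfolding Sg_def in_segment using t by auto
  qed
  define Sol where "Sol = g \<circ> xt"
  have "Sol 0 = y0"
  proof -
    have "(\<lambda>n. f n a) sums g a" by (rule g(1)[OF aS(1)])
    moreover have "(\<lambda>n. f n a) = (\<lambda>n. if n = 1 then y0 ^ n else 0)"
    proof
      fix n
      have "ev a Y $ n = fps_X $ n" unfolding Y_def by (simp only: ev_a_Yf)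
      then have "poly (Y$n) a = (if n = 1 then 1 else 0)" by (simp add: fps_X_nth)
      then show "f n a = (if n = 1 then y0 ^ n else 0)" by (simp add: f_def)
    qed
    ultimately have "(\<lambda>n. if n = 1 then y0 ^ n else 0) sums g a" by simp
    then have "g a = y0" using sums_single[of 1 "\<lambda>n. y0^n"] sums_unique2 by force
    then show ?thesis by (simp add: Sol_def xt_def)
  qed
  moreover have "(\<lambda>n. poly (Y$n) b * y0^n) sums Sol 1"
    using g(1)[OF aS(2)] by (simp add: Sol_def xt_def f_def)
  moreover have "(Sol has_vector_derivative ((b - a) * (poly p (a + of_real t * (b - a)) * (Sol t)^3
        + poly q (a + of_real t * (b - a)) * (Sol t)^2))) (at t within {0..1})" if t: "t \<in> {0..1}" for t
  proof -
    have dx: "(xt has_vector_derivative (b - a)) (at t within {0..1})"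
      unfolding xt_def by (auto intro!: derivative_eq_intros simp: scaleR_conv_of_real)
    have xS: "xt t \<in> Sg" using xtS t by auto
    have "(g has_field_derivative (\<Sum>i. f' i (xt t))) (at (xt t) within xt ` {0..1})"
      by (rule has_field_derivative_subset[OF g(2)[OF xS] xtS])
    from field_vector_diff_chain_within[OF dx this]
    show ?thesis unfolding Sol_def using g'[OF xS] by (simp add: xt_def[abs_def])
  qed
  ultimately show ?thesis by blast
qed

end





context anal
begin

lemma series_b:
  assumes "\<And>n. n \<ge> 2 \<Longrightarrow> poly (Y $ n) b = 0"
  shows "(\<lambda>n. poly (Y$n) b * y^n) = (\<lambda>n. if n = 1 then y^n else 0)"
proof
  fix n
  show "poly (Y$n) b * y^n = (if n = 1 then y^n else 0)"
  proof (cases "n \<ge> 2")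
    case True then show ?thesis using assms by simp
  next
    case False
    then have "n = 0 \<or> n = 1" by auto
    then show ?thesis by (auto simp: Y_def)
  qed
qed

lemma center_iff: "has_center (poly p) (poly q) a b \<longleftrightarrow> (\<forall>n\<ge>2. poly (Yf (Ia a) p q $ n) b = 0)"
proof
  assume "\<forall>n\<ge>2. poly (Yf (Ia a) p q $ n) b = 0"
  then have z: "\<And>n. n \<ge> 2 \<Longrightarrow> poly (Y $ n) b = 0" by (simp add: Y_def)
  show "has_center (poly p) (poly q) a b"
    unfolding has_center_def
  proof (intro exI[of _ r] conjI allI impI)
    show "r > 0" by (rule r_pos)
    fix W :: "real \<Rightarrow> complex"
    assume W: "cmod (W 0) < r \<and>
        (\<forall>t\<in>{0..1}. (W has_vector_derivative
            ((b - a) * (poly p (a + of_real t * (b - a)) * (W t)^3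
                      + poly q (a + of_real t * (b - a)) * (W t)^2))) (at t within {0..1}))"
    obtain Sol where S: "Sol 0 = W 0" "(\<lambda>n. poly (Y$n) b * (W 0)^n) sums Sol 1"
      "\<forall>t\<in>{0..1}. (Sol has_vector_derivative ((b - a) * (poly p (a + of_real t * (b - a)) * (Sol t)^3
        + poly q (a + of_real t * (b - a)) * (Sol t)^2))) (at t within {0..1})"
      using exist[of "W 0"] W by fastforce
    have "W 1 = Sol 1"
      by (rule ode_unique[where P="\<lambda>t. poly p (a + of_real t * (b - a))" and Q="\<lambda>t. poly q (a + of_real t * (b - a))" and c="b - a"])
         (use W S in \<open>auto intro!: continuous_intros\<close>)
    also have "Sol 1 = W 0"
    proof -
      have "(\<lambda>n. if n = 1 then (W 0)^n else 0) sums Sol 1" using S(2) series_b[OF z] by simp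
      then show ?thesis using sums_single[of 1 "\<lambda>n. (W 0)^n"] sums_unique2 by force
    qed
    finally show "W 1 = W 0" .
  qed
next
  assume "has_center (poly p) (poly q) a b"
  then obtain \<delta> where d: "\<delta> > 0" and C: "\<And>W :: real \<Rightarrow> complex. cmod (W 0) < \<delta> \<Longrightarrow>
        (\<forall>t\<in>{0..1}. (W has_vector_derivative
            ((b - a) * (poly p (a + of_real t * (b - a)) * (W t)^3
                      + poly q (a + of_real t * (b - a)) * (W t)^2))) (at t within {0..1}))
        \<Longrightarrow> W 1 = W 0"
    unfolding has_center_def by blast
  define \<rho> where "\<rho> = min \<delta> r"
  have rho: "\<rho> > 0" using d r_pos by (simp add: \<rho>_def)
  define dd where "dd n = poly (Y$n) b - (if n = 1 then 1 else 0)" for n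
  have sm: "(\<lambda>n. dd n * (x - 0)^n) sums 0" if x: "norm (x - 0) < \<rho>" for x
  proof -
    obtain Sol where S: "Sol 0 = x" "(\<lambda>n. poly (Y$n) b * x^n) sums Sol 1"
      "\<forall>t\<in>{0..1}. (Sol has_vector_derivative ((b - a) * (poly p (a + of_real t * (b - a)) * (Sol t)^3
        + poly q (a + of_real t * (b - a)) * (Sol t)^2))) (at t within {0..1})"
      using exist[of x] x by (force simp: \<rho>_def)
    have "Sol 1 = Sol 0" by (rule C) (use S x in \<open>auto simp: \<rho>_def\<close>)
    then have "(\<lambda>n. poly (Y$n) b * x^n) sums x" using S by simp
    moreover have "(\<lambda>n. if n = 1 then x^n else 0) sums x" using sums_single[of 1 "\<lambda>n. x^n"] by simp
    ultimately have "(\<lambda>n. poly (Y$n) b * x^n - (if n = 1 then x^n else 0)) sums (x - x)" by (rule sums_diff)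
    moreover have "(\<lambda>n. poly (Y$n) b * x^n - (if n = 1 then x^n else 0)) = (\<lambda>n. dd n * (x - 0)^n)"
      by (auto simp: dd_def algebra_simps fun_eq_iff)
    ultimately show ?thesis by simp
  qed
  show "\<forall>n\<ge>2. poly (Yf (Ia a) p q $ n) b = 0"
  proof (intro allI impI, rule ccontr)
    fix m :: nat assume m: "m \<ge> 2" "poly (Yf (Ia a) p q $ m) b \<noteq> 0"
    then have "dd m \<noteq> 0" by (simp add: dd_def Y_def)
    note dm = this
    show False
    proof (rule powser_0_nonzero[of \<rho> 0 dd "\<lambda>_. 0" m])
      show "0 < \<rho>" by (rule rho)
      show "\<And>x. norm (x - 0) < \<rho> \<Longrightarrow> (\<lambda>n. dd n * (x - 0) ^ n) sums ((\<lambda>_. 0) x)" using sm by simp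
      show "(\<lambda>_. 0::complex) 0 = 0" by simp
      show "dd m \<noteq> 0" by (rule dm)
      show "0 < m" using m by simp
      fix s :: real assume s: "0 < s" "\<And>z::complex. z \<in> cball 0 s - {0} \<Longrightarrow> (\<lambda>_. 0::complex) z \<noteq> 0"
      show False using s(2)[of "complex_of_real s"] s(1) by (auto simp: dist_norm)
    qed
  qed
qed

end

lemma center_iff':
  "has_center (poly p) (poly q) a b \<longleftrightarrow> (\<forall>n\<ge>2. poly (Yf (Ia a) p q $ n) b = 0)"
  by (rule anal.center_iff)

lemma comp_Yf:
  fixes Pt Qt W :: "complex poly"
  shows "fmap (\<lambda>f. pcompose f W) (Yf (Ia (poly W a)) (pderiv Pt) (smult e (pderiv Qt)))
       = Yf (Ia a) (pderiv (pcompose Pt W)) (smult e (pderiv (pcompose Qt W)))"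
proof (rule Yf_unique)
  let ?Z = "Yf (Ia (poly W a)) (pderiv Pt) (smult e (pderiv Qt))"
  let ?h = "\<lambda>f. pcompose f W"
  let ?H = "fmap ?h ?Z"
  show "?H $ 0 = 0" by simp
  show "?H $ 1 = 1" by (simp add: pcompose_1)
  have m: "\<And>f g. fmap ?h (f*g) = fmap ?h f * fmap ?h g"
    by (rule fmap_mult) (auto simp: pcompose_add pcompose_mult)
  fix n :: nat assume n: "n \<ge> 2"
  define F where "F = pderiv Pt * (?Z*?Z*?Z) $ n + smult e (pderiv Qt) * (?Z*?Z) $ n"
  have "?H $ n = pcompose (Ia (poly W a) F) W" unfolding F_def by (simp add: Yf_rec[OF n])
  also have "\<dots> = Ia a (pderiv (pcompose Pt W) * (?H*?H*?H) $ n + smult e (pderiv (pcompose Qt W)) * (?H*?H) $ n)"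
  proof (rule Ia_unique[symmetric])
    have h3: "pcompose ((?Z*?Z*?Z) $ n) W = (?H*?H*?H) $ n" by (metis fmap_nth m)
    have h2: "pcompose ((?Z*?Z) $ n) W = (?H*?H) $ n" by (metis fmap_nth m)
    show "pderiv (pcompose (Ia (poly W a) F) W) = pderiv (pcompose Pt W) * (?H*?H*?H) $ n + smult e (pderiv (pcompose Qt W)) * (?H*?H) $ n"
    proof -
      have "pderiv (pcompose (Ia (poly W a) F) W) = pcompose F W * pderiv W" by (simp add: pderiv_pcompose)
      also have "pcompose F W = pcompose (pderiv Pt) W * (?H*?H*?H)$n + smult e (pcompose (pderiv Qt) W) * (?H*?H)$n"
        unfolding F_def by (simp only: pcompose_add pcompose_mult pcompose_smult h3 h2)
      also have "\<dots> * pderiv W = pderiv (pcompose Pt W) * (?H*?H*?H) $ n + smult e (pderiv (pcompose Qt W)) * (?H*?H) $ n"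
        by (simp add: pderiv_pcompose algebra_simps)
      finally show ?thesis .
    qed
    show "poly (pcompose (Ia (poly W a) F) W) a = 0" by (simp add: poly_pcompose)
  qed
  finally show "?H $ n = Ia a (pderiv (pcompose Pt W) * (?H*?H*?H) $ n + smult e (pderiv (pcompose Qt W)) * (?H*?H) $ n)" .
qed

lemma COS_center:
  fixes Pt Qt W :: "complex poly"
  assumes "poly W a = poly W b"
  shows "has_center (poly (pderiv (pcompose Pt W))) (\<lambda>x. e * poly (pderiv (pcompose Qt W)) x) a b"
proof -
  have eq: "(\<lambda>x. e * poly (pderiv (pcompose Qt W)) x) = poly (smult e (pderiv (pcompose Qt W)))"
    by auto
  show ?thesis unfolding eq center_iff'
  proof (intro allI impI)
    fix n :: nat assume n: "n \<ge> 2"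
    let ?Z = "Yf (Ia (poly W a)) (pderiv Pt) (smult e (pderiv Qt))"
    have "Yf (Ia a) (pderiv (pcompose Pt W)) (smult e (pderiv (pcompose Qt W))) $ n = pcompose (?Z $ n) W"
      by (simp flip: comp_Yf)
    then show "poly (Yf (Ia a) (pderiv (pcompose Pt W)) (smult e (pderiv (pcompose Qt W))) $ n) b = 0"
      using assms by (simp add: poly_pcompose Yf_rec[OF n])
  qed
qed

lemma scale_center:
  assumes C: "has_center (poly p) (\<lambda>x. \<epsilon> * poly q x) a b" and e: "\<epsilon> \<noteq> 0" and mu: "\<mu> * \<epsilon>^2 = 1"
  shows "has_center (poly (smult \<mu> p)) (poly q) a b"
proof -
  obtain \<delta> where d: "\<delta> > 0" and C: "\<And>W :: real \<Rightarrow> complex. cmod (W 0) < \<delta> \<Longrightarrow>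
        (\<forall>t\<in>{0..1}. (W has_vector_derivative
            ((b - a) * (poly p (a + of_real t * (b - a)) * (W t)^3
                      + \<epsilon> * poly q (a + of_real t * (b - a)) * (W t)^2))) (at t within {0..1}))
        \<Longrightarrow> W 1 = W 0"
    using C unfolding has_center_def by blast
  show ?thesis unfolding has_center_def
  proof (intro exI[of _ "\<delta> * cmod \<epsilon>"] conjI allI impI)
    show "\<delta> * cmod \<epsilon> > 0" using d e by simp
    fix W :: "real \<Rightarrow> complex"
    assume W: "cmod (W 0) < \<delta> * cmod \<epsilon> \<and>
        (\<forall>t\<in>{0..1}. (W has_vector_derivative
            ((b - a) * (poly (smult \<mu> p) (a + of_real t * (b - a)) * (W t)^3
                      + poly q (a + of_real t * (b - a)) * (W t)^2))) (at t within {0..1}))"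
    define V where "V t = inverse \<epsilon> * W t" for t
    have "V 1 = V 0"
    proof (rule C)
      have h: "cmod (W 0) < \<delta> * cmod \<epsilon>" using W by blast
      have "cmod (V 0) = cmod (W 0) / cmod \<epsilon>" by (simp add: V_def norm_mult norm_inverse divide_inverse mult.commute)
      also have "\<dots> < \<delta>" using h e by (simp add: pos_divide_less_eq)
      finally show "cmod (V 0) < \<delta>" .
      show "\<forall>t\<in>{0..1}. (V has_vector_derivative
            ((b - a) * (poly p (a + of_real t * (b - a)) * (V t)^3
                      + \<epsilon> * poly q (a + of_real t * (b - a)) * (V t)^2))) (at t within {0..1})"
      proof
        fix t :: real assume t: "t \<in> {0..1}"
        have dV: "(V has_vector_derivative inverse \<epsilon> * ((b - a) * (poly (smult \<mu> p) (a + of_real t * (b - a)) * (W t)^3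
                      + poly q (a + of_real t * (b - a)) * (W t)^2))) (at t within {0..1})"
          unfolding V_def[abs_def] by (rule has_vector_derivative_mult_right) (use W t in auto)
        have eqn: "inverse \<epsilon> * ((b - a) * (poly (smult \<mu> p) (a + of_real t * (b - a)) * (W t)^3
                      + poly q (a + of_real t * (b - a)) * (W t)^2))
            = (b - a) * (poly p (a + of_real t * (b - a)) * (V t)^3
                      + \<epsilon> * poly q (a + of_real t * (b - a)) * (V t)^2)"
        proof -
          have mu': "\<mu> = inverse (\<epsilon>^2)" using mu e by (simp add: field_simps)
          show ?thesis unfolding V_def mu' using e
            by (simp add: field_simps power2_eq_square power3_eq_cube)
        qed
        show "(V has_vector_derivative
            ((b - a) * (poly p (a + of_real t * (b - a)) * (V t)^3
                      + \<epsilon> * poly q (a + of_real t * (b - a)) * (V t)^2))) (at t within {0..1})"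
          using dV unfolding eqn .
      qed
    qed
    then show "W 1 = W 0" using e by (simp add: V_def)
  qed
qed

theorem main:
  fixes a b :: complex and d :: nat
  shows "COS d a b \<subseteq> PCS d a b \<and> PCS d a b \<subseteq> MS d a b"
proof
  show "COS d a b \<subseteq> PCS d a b"
  proof
    fix x assume "x \<in> COS d a b"
    then obtain P Q Pt Qt W where x: "x = (P, Q)" "P \<in> Pd d a b" "Q \<in> Pd d a b"
      "poly W a = poly W b" "P = pcompose Pt W" "Q = pcompose Qt W"
      unfolding COS_def by blast
    show "x \<in> PCS d a b" unfolding PCS_def using x COS_center[OF x(4)] by auto
  qed
  show "PCS d a b \<subseteq> MS d a b"
  proof
    fix x assume "x \<in> PCS d a b"
    then obtain P Q where x: "x = (P, Q)" "P \<in> Pd d a b" "Q \<in> Pd d a b"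
      and C: "\<And>\<epsilon>. has_center (poly (pderiv P)) (\<lambda>x. \<epsilon> * poly (pderiv Q) x) a b"
      unfolding PCS_def by blast
    have Pa: "poly P a = 0" and Qa: "poly Q a = 0" using x by (auto simp: Pd_def)
    have m1: "contour_integral (linepath a b) (\<lambda>x. (poly P x)^i * poly (pderiv Q) x) = 0" for i
    proof -
      have "ev b (family.V a (pderiv P) 0 0 (pderiv Q)) = 0"
      proof (rule family.V_b[where S=UNIV])
        show "infinite (UNIV :: complex set)" by (rule infinite_UNIV_char_0)
        fix e :: complex and n :: nat assume n: "n \<ge> 2"
        have eq: "(\<lambda>x. e * poly (pderiv Q) x) = poly (smult e (pderiv Q))" by auto
        have "has_center (poly (pderiv P)) (poly (smult e (pderiv Q))) a b" using C[of e] by (simp only: eq)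
        then show "poly (Yf (Ia a) (pderiv P + smult e 0) (0 + smult e (pderiv Q)) $ n) b = 0"
          using n by (simp add: center_iff')
      qed
      then have "contour_integral (linepath a b) (poly (P^i * pderiv Q)) = 0"
        by (rule moments_P[OF refl Pa])
      moreover have "(\<lambda>x. (poly P x)^i * poly (pderiv Q) x) = poly (P^i * pderiv Q)" by auto
      ultimately show ?thesis by simp
    qed
    have m2: "contour_integral (linepath a b) (\<lambda>x. (poly Q x)^i * poly (pderiv P) x) = 0" for i
    proof -
      have "ev b (family.V a 0 (pderiv P) (pderiv Q) 0) = 0"
      proof (rule family.V_b[where S="UNIV - {0}"])
        show "infinite (UNIV - {0} :: complex set)" by (simp add: infinite_UNIV_char_0)
        fix \<mu> :: complex and n :: nat assume mu: "\<mu> \<in> UNIV - {0}" and n: "n \<ge> 2"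
        define \<epsilon> where "\<epsilon> = csqrt (inverse \<mu>)"
        have e2: "\<epsilon>^2 = inverse \<mu>" by (simp add: \<epsilon>_def)
        have e0: "\<epsilon> \<noteq> 0" using mu by (simp add: \<epsilon>_def)
        have mu1: "\<mu> * \<epsilon>^2 = 1" using mu e2 by simp
        have "has_center (poly (smult \<mu> (pderiv P))) (poly (pderiv Q)) a b"
          by (rule scale_center[OF C e0 mu1])
        then show "poly (Yf (Ia a) (0 + smult \<mu> (pderiv P)) (pderiv Q + smult \<mu> 0) $ n) b = 0"
          using n by (simp add: center_iff')
      qed
      then have "contour_integral (linepath a b) (poly (Q^i * pderiv P)) = 0"
        by (rule moments_Q[OF refl Qa])
      moreover have "(\<lambda>x. (poly Q x)^i * poly (pderiv P) x) = poly (Q^i * pderiv P)" by auto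
      ultimately show ?thesis by simp
    qed
    show "x \<in> MS d a b" unfolding MS_def using x m1 m2 by auto
  qed
qed



theorem proposition2p2:
  fixes a b :: complex and d :: nat
  assumes "a \<noteq> b" and "d \<ge> 1"
  shows "COS d a b \<subseteq> PCS d a b \<and> PCS d a b \<subseteq> MS d a b"
  by (rule main)

end
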